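(* Let $A_1,\dots,A_n\subseteq\mathbb Z^n$ be finite, $M=(\mathbb C\setminus\{0\})^n$, and let $\mathscr F_i$ be the space of Laurent polynomials $\sum_{\mathbf a\in A_i}f_{\mathbf a}\mathbf z^{\mathbf a}$ with inner product $\langle\sum f_{\mathbf a}\mathbf z^{\mathbf a},\sum g_{\mathbf a}\mathbf z^{\mathbf a}\rangle=\sum_{\mathbf a\in A_i}f_{\mathbf a}\overline{g_{\mathbf a}}$. Let $\lambda_1,\dots,\lambda_n$ be positive integers, $\mathscr G=\mathscr F_1^{\lambda_1}\cdots\mathscr F_n^{\lambda_n}$ and $B=\lambda_1A_1+\cdots+\lambda_nA_n$ (Minkowski sum). For $\mathbf b\in B$ let $c_{\mathbf b}$ be the number of ordered tuples $(\mathbf a_{11},\dots,\mathbf a_{1\lambda_1},\dots,\mathbf a_{n1},\dots,\mathbf a_{n\lambda_n})$ with $\mathbf a_{ij}\in A_i$ and $\sum_{i,j}\mathbf a_{ij}=\mathbf b$. Then $\mathscr G$ is the space of Laurent polynomials $\sum_{\mathbf b\in B}f_{\mathbf b}\mathbf z^{\mathbf b}$ with inner product \[\Big\langle\sum_{\mathbf b\in B}f_{\mathbf b}\mathbf z^{\mathbf b},\sum_{\mathbf b\in B}g_{\mathbf b}\mathbf z^{\mathbf b}\Big\rangle_{\mathscr G}=\sum_{\mathbf b\in B}\frac{f_{\mathbf b}\overline{g_{\mathbf b}}}{c_{\mathbf b}}.\]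
   Context: A fewspace on a complex manifold $M$ is a complex Hilbert space of holomorphic functions $M\to\mathbb C$ on which every evaluation $f\mapsto f(\mathbf x)$ is a continuous, nonzero linear functional. Product of fewspaces: regard the Hilbert tensor product $\mathscr E\otimes\mathscr F$ as functions on $M\times M$ via $(e\otimes f)(\mathbf x_1,\mathbf x_2)=e(\mathbf x_1)f(\mathbf x_2)$, let $\Delta(h)(\mathbf x)=h(\mathbf x,\mathbf x)$; $\mathscr E\mathscr F=\Delta(\mathscr E\otimes\mathscr F)$ with norm $\|g\|=\min\{\|h\|:\Delta(h)=g\}$; $\mathscr F^\lambda$ is the $\lambda$-fold product. *)

theory Defs
  imports "HOL-Analysis.Analysis"
begin

text \<open>A finite-dimensional Hilbert space of complex functions on a domain, given by
  its carrier (a set of functions) and its inner product (linear in the first,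
  conjugate-linear in the second argument).\<close>
type_synonym 'x fsp = "('x \<Rightarrow> complex) set \<times> (('x \<Rightarrow> complex) \<Rightarrow> ('x \<Rightarrow> complex) \<Rightarrow> complex)"

definition is_onb :: "'x fsp \<Rightarrow> ('x \<Rightarrow> complex) set \<Rightarrow> bool" where
  "is_onb E B \<longleftrightarrow> finite B \<and> B \<subseteq> fst E
     \<and> (\<forall>e\<in>B. \<forall>f\<in>B. snd E e f = (if e = f then 1 else 0))
     \<and> fst E = {(\<lambda>x. \<Sum>e\<in>B. c e * e x) | c. True}"

text \<open>The Hilbert tensor product E (x) F is realised via
  orthonormal bases eb, fb of E and F: its elements are the coefficient families
  h on eb \<times> fb (norm = l2 norm of h), representing the function
  (x1,x2) \<mapsto> \<Sum> h(e,f) e(x1) f(x2).  The diagonal restriction is fdelta;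
  the product space is its image with the minimal norm; the inner product is
  recovered from the norm by polarization.\<close>
definition fdelta :: "('x \<Rightarrow> complex) set \<Rightarrow> ('x \<Rightarrow> complex) set
     \<Rightarrow> (('x \<Rightarrow> complex) \<times> ('x \<Rightarrow> complex) \<Rightarrow> complex) \<Rightarrow> ('x \<Rightarrow> complex)" where
  "fdelta eb fb h = (\<lambda>x. \<Sum>p\<in>eb \<times> fb. h p * fst p x * snd p x)"

definition fprod_norm :: "'x fsp \<Rightarrow> 'x fsp \<Rightarrow> ('x \<Rightarrow> complex) \<Rightarrow> real" where
  "fprod_norm E F g =
     (let eb = (SOME B. is_onb E B); fb = (SOME B. is_onb F B) in
      Inf {sqrt (\<Sum>p\<in>eb \<times> fb. (cmod (h p))\<^sup>2) | h. fdelta eb fb h = g})"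

definition fprod :: "'x fsp \<Rightarrow> 'x fsp \<Rightarrow> 'x fsp" where
  "fprod E F =
     (let eb = (SOME B. is_onb E B); fb = (SOME B. is_onb F B);
          N = fprod_norm E F in
      ({fdelta eb fb h | h. True},
       (\<lambda>g k. ((complex_of_real ((N (\<lambda>x. g x + k x))\<^sup>2) - complex_of_real ((N (\<lambda>x. g x - k x))\<^sup>2))
              + \<i> * complex_of_real ((N (\<lambda>x. g x + \<i> * k x))\<^sup>2)
              - \<i> * complex_of_real ((N (\<lambda>x. g x - \<i> * k x))\<^sup>2)) / 4)))"

fun fpow :: "'x fsp \<Rightarrow> nat \<Rightarrow> 'x fsp" where
  "fpow F (Suc 0) = F"
| "fpow F (Suc (Suc k)) = fprod (fpow F (Suc k)) F"

fun fprod_list :: "'x fsp list \<Rightarrow> 'x fsp" where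
  "fprod_list [E] = E"
| "fprod_list (E # F # r) = fprod_list (fprod E F # r)"

text \<open>The torus M = (C \ {0})^n, monomials, and Laurent polynomial spaces.
  Functions are regarded as functions on M, extended by 0 outside M.\<close>
definition torus :: "(complex ^ 'n) set" where
  "torus = {z. \<forall>k. z $ k \<noteq> 0}"

definition monom :: "int ^ 'n \<Rightarrow> complex ^ 'n \<Rightarrow> complex" where
  "monom a z = (\<Prod>k\<in>UNIV. (z $ k) powi (a $ k))"

definition laurent :: "(int ^ 'n) set \<Rightarrow> (int ^ 'n \<Rightarrow> complex) \<Rightarrow> (complex ^ 'n \<Rightarrow> complex)" where
  "laurent A c = (\<lambda>z. if z \<in> torus then (\<Sum>a\<in>A. c a * monom a z) else 0)"

definition lcoeff :: "(int ^ 'n) set \<Rightarrow> (complex ^ 'n \<Rightarrow> complex) \<Rightarrow> int ^ 'n \<Rightarrow> complex" where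
  "lcoeff A f = (SOME c. f = laurent A c)"

definition laurent_space :: "(int ^ 'n) set \<Rightarrow> (int ^ 'n \<Rightarrow> real) \<Rightarrow> (complex ^ 'n) fsp" where
  "laurent_space A w =
     ({laurent A c | c. True},
      (\<lambda>f g. \<Sum>a\<in>A. lcoeff A f a * cnj (lcoeff A g a) / complex_of_real (w a)))"

definition tuples :: "('n \<Rightarrow> (int ^ 'n) set) \<Rightarrow> ('n \<Rightarrow> nat) \<Rightarrow> ('n \<Rightarrow> nat \<Rightarrow> int ^ 'n) set" where
  "tuples A lam = {t. (\<forall>i. \<forall>j<lam i. t i j \<in> A i) \<and> (\<forall>i j. lam i \<le> j \<longrightarrow> t i j = 0)}"

definition tsum :: "('n::finite \<Rightarrow> nat) \<Rightarrow> ('n \<Rightarrow> nat \<Rightarrow> int ^ 'n) \<Rightarrow> int ^ 'n" where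
  "tsum lam t = (\<Sum>i\<in>UNIV. \<Sum>j<lam i. t i j)"

definition minksum :: "('n::finite \<Rightarrow> (int ^ 'n) set) \<Rightarrow> ('n \<Rightarrow> nat) \<Rightarrow> (int ^ 'n) set" where
  "minksum A lam = tsum lam ` tuples A lam"

definition tcount :: "('n::finite \<Rightarrow> (int ^ 'n) set) \<Rightarrow> ('n \<Rightarrow> nat) \<Rightarrow> int ^ 'n \<Rightarrow> nat" where
  "tcount A lam b = card {t \<in> tuples A lam. tsum lam t = b}"

end

theory Submission
  imports Defs
begin


lemma monom_mult:
  "monom a (\<chi> k. u $ k * z $ k) = monom a u * monom a z"
  by (simp add: monom_def power_int_mult_distrib prod.distrib)

lemma monom_add:
  assumes "z \<in> torus" shows "monom (a + b) z = monom a z * monom b z"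
  using assms by (simp add: monom_def torus_def power_int_add prod.distrib)

lemma monom_nz:
  assumes "z \<in> torus" shows "monom a z \<noteq> 0"
  using assms by (simp add: monom_def torus_def)

lemma torus_mult:
  "u \<in> torus \<Longrightarrow> z \<in> torus \<Longrightarrow> (\<chi> k. u $ k * z $ k) \<in> torus"
  by (simp add: torus_def)

lemma monom_sep:
  fixes a b :: "int ^ 'n"
  assumes "a \<noteq> b"
  shows "\<exists>u\<in>torus. monom a u \<noteq> monom b u"
proof -
  obtain k where k: "a $ k \<noteq> b $ k" using assms by (metis vec_eq_iff)
  define u :: "complex ^ 'n" where "u = (\<chi> j. if j = k then 2 else 1)"
  have ut: "u \<in> torus" by (simp add: torus_def u_def)
  have m: "monom c u = 2 powi (c $ k)" for c :: "int ^ 'n"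
  proof -
    have "monom c u = (\<Prod>j\<in>UNIV. if j = k then 2 powi (c $ k) else 1)"
      unfolding monom_def u_def by (intro prod.cong) auto
    also have "\<dots> = 2 powi (c $ k)" by (simp add: prod.delta)
    finally show ?thesis .
  qed
  have "(2::real) powi (a $ k) \<noteq> 2 powi (b $ k)"
  proof (cases "a $ k < b $ k")
    case True
    have "(2::real) powi (a $ k) < 2 powi (b $ k)"
      by (rule power_int_strict_increasing[OF True]) simp
    thus ?thesis by (rule less_imp_neq)
  next
    case False
    hence lt: "b $ k < a $ k" using k by (simp add: not_less order.order_iff_strict)
    have "(2::real) powi (b $ k) < 2 powi (a $ k)"
      by (rule power_int_strict_increasing[OF lt]) simp
    thus ?thesis by (metis less_imp_neq)
  qed
  hence "complex_of_real (2 powi (a $ k)) \<noteq> complex_of_real (2 powi (b $ k))"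
    by (metis of_real_eq_iff)
  hence "(2::complex) powi (a $ k) \<noteq> 2 powi (b $ k)"
    by (simp add: of_real_power_int)
  hence "monom a u \<noteq> monom b u" unfolding m .
  thus ?thesis using ut by blast
qed

lemma monom_indep:
  fixes S :: "(int ^ 'n) set"
  assumes "finite S"
  shows "\<And>c. (\<forall>z\<in>torus. (\<Sum>a\<in>S. c a * monom a z) = 0) \<Longrightarrow> \<forall>a\<in>S. c a = 0"
  using assms
proof (induction S rule: finite_induct)
  case empty thus ?case by simp
next
  case (insert a0 S c)
  have rel: "(\<Sum>a\<in>S. c a * monom a z) = - c a0 * monom a0 z" if "z \<in> torus" for z
    using insert.prems insert.hyps that by (simp add: add_eq_0_iff)
  have cS: "c a = 0" if aS: "a \<in> S" for a
  proof -
    have "a \<noteq> a0" using aS insert.hyps by auto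
    then obtain u where u: "u \<in> torus" "monom a u \<noteq> monom a0 u" using monom_sep by blast
    have "\<forall>z\<in>torus. (\<Sum>b\<in>S. (c b * (monom b u - monom a0 u)) * monom b z) = 0"
    proof
      fix z :: "complex ^ 'n" assume z: "z \<in> torus"
      have uz: "(\<chi> k. u $ k * z $ k) \<in> torus" using u z torus_mult by blast
      have "(\<Sum>b\<in>S. (c b * (monom b u - monom a0 u)) * monom b z)
          = (\<Sum>b\<in>S. c b * monom b (\<chi> k. u $ k * z $ k)) - monom a0 u * (\<Sum>b\<in>S. c b * monom b z)"
        by (simp add: monom_mult algebra_simps sum_subtractf sum_distrib_left)
      also have "\<dots> = 0" using rel[OF uz] rel[OF z] by (simp add: monom_mult)
      finally show "(\<Sum>b\<in>S. (c b * (monom b u - monom a0 u)) * monom b z) = 0" .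
    qed
    from insert.IH[OF this] aS have "c a * (monom a u - monom a0 u) = 0" by blast
    thus ?thesis using u by simp
  qed
  have "\<exists>z. z \<in> (torus :: (complex^'n) set)" by (rule exI[of _ "\<chi> k. 1"]) (simp add: torus_def)
  then obtain z :: "complex ^ 'n" where z: "z \<in> torus" by blast
  have "c a0 * monom a0 z = 0" using rel[OF z] cS by simp
  hence "c a0 = 0" using monom_nz[OF z] by simp
  thus ?case using cS by auto
qed



lemma laurent_indep:
  fixes S :: "(int ^ 'n) set"
  assumes "finite S" "laurent S c = laurent S d" "a \<in> S"
  shows "c a = d a"
proof -
  have "\<forall>z\<in>torus. (\<Sum>a\<in>S. (c a - d a) * monom a z) = 0"
  proof
    fix z :: "complex^'n" assume z: "z \<in> torus"
    have "laurent S c z = laurent S d z" using assms(2) by simp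
    thus "(\<Sum>a\<in>S. (c a - d a) * monom a z) = 0"
      using z by (simp add: laurent_def algebra_simps sum_subtractf)
  qed
  from monom_indep[OF assms(1) this] assms(3) show ?thesis by simp
qed

lemma lcoeff_laurent:
  assumes "finite S" "a \<in> S"
  shows "lcoeff S (laurent S c) a = c a"
proof -
  have "laurent S c = laurent S (lcoeff S (laurent S c))"
    unfolding lcoeff_def by (rule someI[of "\<lambda>d. laurent S c = laurent S d" c]) simp
  from laurent_indep[OF assms(1) this assms(2)] show ?thesis by simp
qed

lemma laurent_cong:
  "(\<And>a. a \<in> S \<Longrightarrow> c a = d a) \<Longrightarrow> laurent S c = laurent S d"
  unfolding laurent_def by (intro ext) (auto intro!: sum.cong)

lemma laurent_lincomb:
  "(\<Sum>e\<in>B. k e * laurent S (d e) x) = laurent S (\<lambda>a. \<Sum>e\<in>B. k e * d e a) x"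
  unfolding laurent_def
  by (auto simp: sum_distrib_left sum_distrib_right mult.assoc intro: sum.swap)

lemma laurent_add:
  "laurent S c x + laurent S d x = laurent S (\<lambda>a. c a + d a) x"
  unfolding laurent_def by (simp add: algebra_simps sum.distrib)
lemma laurent_diff:
  "laurent S c x - laurent S d x = laurent S (\<lambda>a. c a - d a) x"
  unfolding laurent_def by (simp add: algebra_simps sum_subtractf)
lemma laurent_smult:
  "k * laurent S c x = laurent S (\<lambda>a. k * c a) x"
  unfolding laurent_def by (simp add: sum_distrib_left mult.assoc)

lemma laurent_space_fst: "fst (laurent_space S w) = {laurent S c | c. True}"
  by (simp add: laurent_space_def)

lemma laurent_space_snd:
  "snd (laurent_space S w) f g = (\<Sum>a\<in>S. lcoeff S f a * cnj (lcoeff S g a) / complex_of_real (w a))"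
  by (simp add: laurent_space_def)

lemma laurent_space_weights:
  "(\<And>a. a \<in> S \<Longrightarrow> w a = w' a) \<Longrightarrow> laurent_space S w = laurent_space S w'"
  unfolding laurent_space_def by (auto intro!: ext sum.cong)

context
  fixes S :: "(int^'n::finite) set" and w :: "int^'n \<Rightarrow> real"
  assumes finS: "finite S" and wpos: "\<And>a. a \<in> S \<Longrightarrow> w a > 0"
begin

definition sb :: "int^'n \<Rightarrow> complex^'n \<Rightarrow> complex" where
  "sb a = laurent S (\<lambda>x. if x = a then complex_of_real (sqrt (w a)) else 0)"

lemma sb_inj: "inj_on sb S"
proof (rule inj_onI)
  fix a b assume ab: "a \<in> S" "b \<in> S" "sb a = sb b"
  have "(if a = a then complex_of_real (sqrt (w a)) else 0) = (if a = b then complex_of_real (sqrt (w b)) else 0)"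
    using laurent_indep[OF finS ab(3)[unfolded sb_def] ab(1)] .
  thus "a = b" using wpos[OF ab(1)] by (auto split: if_splits)
qed

lemma onb_exists: "is_onb (laurent_space S w) (sb ` S)"
  unfolding is_onb_def
proof (intro conjI)
  show "finite (sb ` S)" using finS by simp
  show "sb ` S \<subseteq> fst (laurent_space S w)" by (auto simp: laurent_space_fst sb_def)
  show "\<forall>e\<in>sb ` S. \<forall>f\<in>sb ` S. snd (laurent_space S w) e f = (if e = f then 1 else 0)"
  proof (intro ballI)
    fix e f assume "e \<in> sb ` S" "f \<in> sb ` S"
    then obtain a b where ab: "a \<in> S" "b \<in> S" "e = sb a" "f = sb b" by auto
    have "snd (laurent_space S w) e f =
       (\<Sum>x\<in>S. (if x = a then complex_of_real (sqrt (w a)) else 0) * cnj (if x = b then complex_of_real (sqrt (w b)) else 0) / complex_of_real (w x))"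
      unfolding laurent_space_snd ab sb_def
      by (intro sum.cong) (auto simp: lcoeff_laurent finS)
    also have "\<dots> = (if a = b then 1 else 0)"
    proof (cases "a = b")
      case True
      have "(\<Sum>x\<in>S. (if x = a then complex_of_real (sqrt (w a)) else 0) * cnj (if x = b then complex_of_real (sqrt (w b)) else 0) / complex_of_real (w x))
          = (\<Sum>x\<in>S. if x = a then complex_of_real (sqrt (w a)) * complex_of_real (sqrt (w a)) / complex_of_real (w a) else 0)"
        using True by (intro sum.cong) auto
      also have "\<dots> = 1" using ab(1) wpos[OF ab(1)] finS
        by (simp add: sum.delta flip: of_real_mult)
      finally show ?thesis using True by simp
    next
      case False
      thus ?thesis by (intro trans[OF sum.neutral]) auto
    qed
    finally show "snd (laurent_space S w) e f = (if e = f then 1 else 0)"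
      using ab sb_inj by (auto simp: inj_on_eq_iff)
  qed
  show "fst (laurent_space S w) = {\<lambda>x. \<Sum>e\<in>sb ` S. c e * e x |c. True}"
  proof (intro equalityI subsetI)
    fix f assume "f \<in> fst (laurent_space S w)"
    then obtain c where f: "f = laurent S c" by (auto simp: laurent_space_fst)
    define k where "k e = c (inv_into S sb e) / complex_of_real (sqrt (w (inv_into S sb e)))" for e
    have "(\<lambda>x. \<Sum>e\<in>sb ` S. k e * e x) = (\<lambda>x. \<Sum>a\<in>S. k (sb a) * sb a x)"
      by (intro ext sum.reindex[OF sb_inj, unfolded comp_def])
    also have "\<dots> = f"
    proof
      fix x
      have "(\<Sum>a\<in>S. k (sb a) * sb a x) = laurent S (\<lambda>y. \<Sum>a\<in>S. k (sb a) * (if y = a then complex_of_real (sqrt (w a)) else 0)) x"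
        unfolding sb_def by (rule laurent_lincomb)
      also have "\<dots> = laurent S c x"
      proof (rule arg_cong[where f="\<lambda>h. h x"], rule laurent_cong)
        fix y assume y: "y \<in> S"
        have "(\<Sum>a\<in>S. k (sb a) * (if y = a then complex_of_real (sqrt (w a)) else 0))
            = k (sb y) * complex_of_real (sqrt (w y))"
          using y finS by (simp add: if_distrib sum.delta cong: if_cong)
        also have "\<dots> = c y" using y wpos[OF y] sb_inj by (simp add: k_def)
        finally show "(\<Sum>a\<in>S. k (sb a) * (if y = a then complex_of_real (sqrt (w a)) else 0)) = c y" .
      qed
      finally show "(\<Sum>a\<in>S. k (sb a) * sb a x) = f x" using f by simp
    qed
    finally show "f \<in> {\<lambda>x. \<Sum>e\<in>sb ` S. c e * e x |c. True}" by auto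
  next
    fix f assume "f \<in> {\<lambda>x. \<Sum>e\<in>sb ` S. c e * e x |c. True}"
    then obtain k where f: "f = (\<lambda>x. \<Sum>e\<in>sb ` S. k e * e x)" by auto
    have "f = (\<lambda>x. \<Sum>a\<in>S. k (sb a) * sb a x)" unfolding f
      by (intro ext sum.reindex[OF sb_inj, unfolded comp_def])
    also have "\<dots> = laurent S (\<lambda>y. \<Sum>a\<in>S. k (sb a) * (if y = a then complex_of_real (sqrt (w a)) else 0))"
      unfolding sb_def by (intro ext laurent_lincomb)
    finally show "f \<in> fst (laurent_space S w)" by (auto simp: laurent_space_fst)
  qed
qed

end


context
  fixes S :: "(int^'n::finite) set" and w :: "int^'n \<Rightarrow> real" and eb
  assumes finS: "finite S" and wpos: "\<And>a. a \<in> S \<Longrightarrow> w a > 0"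
    and onb: "is_onb (laurent_space S w) eb"
begin

lemma eb_fin: "finite eb" using onb by (simp add: is_onb_def)

lemma O1: "e \<in> eb \<Longrightarrow> e = laurent S (lcoeff S e)"
proof -
  assume "e \<in> eb"
  hence "e \<in> fst (laurent_space S w)" using onb by (auto simp: is_onb_def)
  then obtain c where c: "e = laurent S c" by (auto simp: laurent_space_fst)
  show ?thesis unfolding c by (rule laurent_cong) (simp add: lcoeff_laurent finS)
qed

lemma O2: "e \<in> eb \<Longrightarrow> e' \<in> eb \<Longrightarrow>
  (\<Sum>a\<in>S. lcoeff S e a * cnj (lcoeff S e' a) / complex_of_real (w a)) = (if e = e' then 1 else 0)"
  using onb by (simp add: is_onb_def laurent_space_snd)

lemma O3:
  assumes a: "a \<in> S" and x: "x \<in> S"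
  shows "(\<Sum>e\<in>eb. cnj (lcoeff S e a) * lcoeff S e x) = (if a = x then complex_of_real (w a) else 0)"
proof -
  let ?ce = "lcoeff S"
  have "laurent S (\<lambda>y. if y = a then 1 else 0) \<in> fst (laurent_space S w)"
    by (auto simp: laurent_space_fst)
  then obtain c where c: "laurent S (\<lambda>y. if y = a then 1 else 0) = (\<lambda>z. \<Sum>e\<in>eb. c e * e z)"
    using onb unfolding is_onb_def by auto
  also have "\<dots> = (\<lambda>z. \<Sum>e\<in>eb. c e * laurent S (?ce e) z)"
    by (intro ext sum.cong refl) (metis O1)
  also have "\<dots> = laurent S (\<lambda>y. \<Sum>e\<in>eb. c e * ?ce e y)"
    by (intro ext laurent_lincomb)
  finally have eq: "\<And>y. y \<in> S \<Longrightarrow> (if y = a then 1 else 0) = (\<Sum>e\<in>eb. c e * ?ce e y)"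
    using laurent_indep[OF finS] by blast
  have cval: "c e' = cnj (?ce e' a) / complex_of_real (w a)" if e': "e' \<in> eb" for e'
  proof -
    have "(\<Sum>y\<in>S. (if y = a then 1 else 0) * cnj (?ce e' y) / complex_of_real (w y))
        = (\<Sum>y\<in>S. if y = a then cnj (?ce e' y) / complex_of_real (w y) else 0)"
      by (intro sum.cong) auto
    also have "\<dots> = cnj (?ce e' a) / complex_of_real (w a)" using a finS by simp
    finally have "cnj (?ce e' a) / complex_of_real (w a)
        = (\<Sum>y\<in>S. (if y = a then 1 else 0) * cnj (?ce e' y) / complex_of_real (w y))" by simp
    also have "\<dots> = (\<Sum>y\<in>S. (\<Sum>e\<in>eb. c e * ?ce e y) * cnj (?ce e' y) / complex_of_real (w y))"
      by (intro sum.cong refl) (simp add: eq)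
    also have "\<dots> = (\<Sum>y\<in>S. \<Sum>e\<in>eb. c e * (?ce e y * cnj (?ce e' y) / complex_of_real (w y)))"
      by (simp add: sum_distrib_right sum_divide_distrib mult.assoc)
    also have "\<dots> = (\<Sum>e\<in>eb. \<Sum>y\<in>S. c e * (?ce e y * cnj (?ce e' y) / complex_of_real (w y)))"
      by (rule sum.swap)
    also have "\<dots> = (\<Sum>e\<in>eb. c e * (\<Sum>y\<in>S. ?ce e y * cnj (?ce e' y) / complex_of_real (w y)))"
      by (simp add: sum_distrib_left)
    also have "\<dots> = (\<Sum>e\<in>eb. c e * (if e = e' then 1 else 0))"
      by (intro sum.cong refl) (simp add: O2 e')
    also have "\<dots> = (\<Sum>e\<in>eb. if e = e' then c e else 0)" by (intro sum.cong) auto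
    also have "\<dots> = c e'" using e' eb_fin by simp
    finally show ?thesis by simp
  qed
  have "(if x = a then 1 else 0) = (\<Sum>e\<in>eb. cnj (?ce e a) / complex_of_real (w a) * ?ce e x)"
    using eq[OF x] by (simp add: cval)
  also have "\<dots> = (\<Sum>e\<in>eb. cnj (?ce e a) * ?ce e x) / complex_of_real (w a)"
    by (simp add: sum_divide_distrib)
  finally have "(\<Sum>e\<in>eb. cnj (?ce e a) * ?ce e x) = (if x = a then 1 else 0) * complex_of_real (w a)"
    using wpos[OF a] by (simp add: field_simps)
  thus ?thesis by auto
qed

lemma eb_zero: "e \<in> eb \<Longrightarrow> z \<notin> torus \<Longrightarrow> e z = 0"
  by (subst O1) (auto simp: laurent_def)

lemma eb_torus: "e \<in> eb \<Longrightarrow> z \<in> torus \<Longrightarrow> e z = (\<Sum>a\<in>S. lcoeff S e a * monom a z)"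
  by (subst O1) (auto simp: laurent_def)

end


lemma sum_fibers:
  assumes "finite X"
  shows "(\<Sum>q\<in>X. g q) = (\<Sum>b\<in>\<sigma> ` X. \<Sum>q\<in>X. if \<sigma> q = b then g q else 0)"
  using sum.image_gen[OF assms, of g \<sigma>] assms by (simp add: sum.inter_filter)

lemma sum_prod_split:
  fixes f :: "'a \<Rightarrow> 'c::semiring_0"
  shows "(\<Sum>q\<in>S \<times> T. f (fst q) * g (snd q)) = (\<Sum>a\<in>S. f a) * (\<Sum>b\<in>T. g b)"
proof -
  have "(\<Sum>a\<in>S. f a) * (\<Sum>b\<in>T. g b) = (\<Sum>i\<in>S. \<Sum>j\<in>T. f i * g j)" by (rule sum_product)
  also have "\<dots> = (\<Sum>(i,j)\<in>S \<times> T. f i * g j)" by (rule sum.cartesian_product)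
  also have "\<dots> = (\<Sum>q\<in>S \<times> T. f (fst q) * g (snd q))" by (intro sum.cong) auto
  finally show ?thesis by simp
qed

definition KK where
  "KK S T eb fb h q = (\<Sum>p\<in>eb \<times> fb. h p * lcoeff S (fst p) (fst q) * lcoeff T (snd p) (snd q))"

definition psum :: "(int^'n) set \<Rightarrow> (int^'n) set \<Rightarrow> (int^'n) set" where
  "psum S T = (\<lambda>q. fst q + snd q) ` (S \<times> T)"

definition WW :: "(int^'n) set \<Rightarrow> (int^'n) set \<Rightarrow> (int^'n \<Rightarrow> real) \<Rightarrow> (int^'n \<Rightarrow> real) \<Rightarrow> int^'n \<Rightarrow> real" where
  "WW S T w v b = (\<Sum>q\<in>S \<times> T. if fst q + snd q = b then w (fst q) * v (snd q) else 0)"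

context
  fixes S T :: "(int^'n::finite) set" and w v :: "int^'n \<Rightarrow> real" and eb fb
  assumes finS: "finite S" and wpos: "\<And>a. a \<in> S \<Longrightarrow> w a > 0"
    and onbE: "is_onb (laurent_space S w) eb"
  assumes finT: "finite T" and vpos: "\<And>a. a \<in> T \<Longrightarrow> v a > 0"
    and onbF: "is_onb (laurent_space T v) fb"
begin

lemma finE: "finite eb" using eb_fin[OF finS wpos onbE] .
lemma finF: "finite fb" using eb_fin[OF finT vpos onbF] .

lemma D: "fdelta eb fb h = laurent (psum S T)
   (\<lambda>b. \<Sum>q\<in>S \<times> T. if fst q + snd q = b then KK S T eb fb h q else 0)"
proof
  fix z :: "complex^'n"
  show "fdelta eb fb h z = laurent (psum S T)
   (\<lambda>b. \<Sum>q\<in>S \<times> T. if fst q + snd q = b then KK S T eb fb h q else 0) z"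
  proof (cases "z \<in> torus")
    case False
    have "fdelta eb fb h z = 0" unfolding fdelta_def
      by (intro sum.neutral) (auto simp: eb_zero[OF finS wpos onbE _ False])
    thus ?thesis using False by (simp add: laurent_def)
  next
    case True
    have "fdelta eb fb h z = (\<Sum>p\<in>eb \<times> fb. h p * (\<Sum>a\<in>S. lcoeff S (fst p) a * monom a z) * (\<Sum>a\<in>T. lcoeff T (snd p) a * monom a z))"
      unfolding fdelta_def
      by (intro sum.cong refl) (auto simp: eb_torus[OF finS wpos onbE _ True] eb_torus[OF finT vpos onbF _ True])
    also have "\<dots> = (\<Sum>p\<in>eb \<times> fb. \<Sum>q\<in>S \<times> T. h p * lcoeff S (fst p) (fst q) * lcoeff T (snd p) (snd q) * monom (fst q + snd q) z)"
    proof (intro sum.cong refl)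
      fix p
      have "(\<Sum>a\<in>S. lcoeff S (fst p) a * monom a z) * (\<Sum>a\<in>T. lcoeff T (snd p) a * monom a z)
         = (\<Sum>q\<in>S \<times> T. (lcoeff S (fst p) (fst q) * monom (fst q) z) * (lcoeff T (snd p) (snd q) * monom (snd q) z))"
        by (rule sum_prod_split[symmetric])
      hence "h p * (\<Sum>a\<in>S. lcoeff S (fst p) a * monom a z) * (\<Sum>a\<in>T. lcoeff T (snd p) a * monom a z)
         = h p * (\<Sum>q\<in>S \<times> T. (lcoeff S (fst p) (fst q) * monom (fst q) z) * (lcoeff T (snd p) (snd q) * monom (snd q) z))"
        by (simp only: mult.assoc)
      also have "\<dots> = (\<Sum>q\<in>S \<times> T. h p * ((lcoeff S (fst p) (fst q) * monom (fst q) z) * (lcoeff T (snd p) (snd q) * monom (snd q) z)))"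
        by (rule sum_distrib_left)
      also have "\<dots> = (\<Sum>q\<in>S \<times> T. h p * lcoeff S (fst p) (fst q) * lcoeff T (snd p) (snd q) * monom (fst q + snd q) z)"
        by (intro sum.cong refl) (simp add: monom_add[OF True] mult_ac)
      finally show "h p * (\<Sum>a\<in>S. lcoeff S (fst p) a * monom a z) * (\<Sum>a\<in>T. lcoeff T (snd p) a * monom a z)
         = (\<Sum>q\<in>S \<times> T. h p * lcoeff S (fst p) (fst q) * lcoeff T (snd p) (snd q) * monom (fst q + snd q) z)" .
    qed
    also have "\<dots> = (\<Sum>q\<in>S \<times> T. \<Sum>p\<in>eb \<times> fb. h p * lcoeff S (fst p) (fst q) * lcoeff T (snd p) (snd q) * monom (fst q + snd q) z)"
      by (rule sum.swap)
    also have "\<dots> = (\<Sum>q\<in>S \<times> T. KK S T eb fb h q * monom (fst q + snd q) z)"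
      by (simp add: KK_def sum_distrib_right)
    also have "\<dots> = (\<Sum>b\<in>psum S T. \<Sum>q\<in>S \<times> T. if fst q + snd q = b then KK S T eb fb h q * monom (fst q + snd q) z else 0)"
      unfolding psum_def by (rule sum_fibers) (simp add: finS finT)
    also have "\<dots> = (\<Sum>b\<in>psum S T. (\<Sum>q\<in>S \<times> T. if fst q + snd q = b then KK S T eb fb h q else 0) * monom b z)"
      by (intro sum.cong refl) (auto simp: sum_distrib_right intro!: sum.cong)
    also have "\<dots> = laurent (psum S T)
      (\<lambda>b. \<Sum>q\<in>S \<times> T. if fst q + snd q = b then KK S T eb fb h q else 0) z"
      using True by (simp add: laurent_def)
    finally show ?thesis .
  qed
qed

end


context
  fixes S T :: "(int^'n::finite) set" and w v :: "int^'n \<Rightarrow> real" and eb fb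
  assumes finS: "finite S" and wpos: "\<And>a. a \<in> S \<Longrightarrow> w a > 0"
    and onbE: "is_onb (laurent_space S w) eb"
  assumes finT: "finite T" and vpos: "\<And>a. a \<in> T \<Longrightarrow> v a > 0"
    and onbF: "is_onb (laurent_space T v) fb"
begin

lemma finE': "finite eb" using eb_fin[OF finS wpos onbE] .
lemma finF': "finite fb" using eb_fin[OF finT vpos onbF] .

lemma N: "(\<Sum>q\<in>S \<times> T. KK S T eb fb h q * cnj (KK S T eb fb h q) / complex_of_real (w (fst q) * v (snd q)))
   = (\<Sum>p\<in>eb \<times> fb. h p * cnj (h p))"
proof -
  let ?ce = "lcoeff S" and ?cf = "lcoeff T"
  define X where "X p p' q = h p * cnj (h p') * (?ce (fst p) (fst q) * cnj (?ce (fst p') (fst q)) / complex_of_real (w (fst q)))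
      * (?cf (snd p) (snd q) * cnj (?cf (snd p') (snd q)) / complex_of_real (v (snd q)))" for p p' q
  have "(\<Sum>q\<in>S \<times> T. KK S T eb fb h q * cnj (KK S T eb fb h q) / complex_of_real (w (fst q) * v (snd q)))
      = (\<Sum>q\<in>S \<times> T. \<Sum>p\<in>eb \<times> fb. \<Sum>p'\<in>eb \<times> fb. X p p' q)"
  proof (intro sum.cong refl)
    fix q
    show "KK S T eb fb h q * cnj (KK S T eb fb h q) / complex_of_real (w (fst q) * v (snd q))
        = (\<Sum>p\<in>eb \<times> fb. \<Sum>p'\<in>eb \<times> fb. X p p' q)"
      unfolding KK_def cnj_sum sum_product sum_divide_distrib
      by (intro sum.cong refl) (simp add: X_def field_simps)
  qed
  also have "\<dots> = (\<Sum>p\<in>eb \<times> fb. \<Sum>q\<in>S \<times> T. \<Sum>p'\<in>eb \<times> fb. X p p' q)"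
    by (rule sum.swap)
  also have "\<dots> = (\<Sum>p\<in>eb \<times> fb. \<Sum>p'\<in>eb \<times> fb. \<Sum>q\<in>S \<times> T. X p p' q)"
    by (intro sum.cong refl sum.swap)
  also have "\<dots> = (\<Sum>p\<in>eb \<times> fb. \<Sum>p'\<in>eb \<times> fb. if p = p' then h p * cnj (h p) else 0)"
  proof (intro sum.cong refl)
    fix p p' assume p: "p \<in> eb \<times> fb" and p': "p' \<in> eb \<times> fb"
    have "(\<Sum>q\<in>S \<times> T. X p p' q) = h p * cnj (h p') *
      ((\<Sum>a\<in>S. ?ce (fst p) a * cnj (?ce (fst p') a) / complex_of_real (w a)) *
       (\<Sum>b\<in>T. ?cf (snd p) b * cnj (?cf (snd p') b) / complex_of_real (v b)))"
    proof -
      have "(\<Sum>q\<in>S \<times> T. X p p' q) = (\<Sum>q\<in>S \<times> T. (h p * cnj (h p')) *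
        ((\<lambda>a. ?ce (fst p) a * cnj (?ce (fst p') a) / complex_of_real (w a)) (fst q) *
         (\<lambda>b. ?cf (snd p) b * cnj (?cf (snd p') b) / complex_of_real (v b)) (snd q)))"
        unfolding X_def by (intro sum.cong refl) (simp add: mult_ac)
      also have "\<dots> = (h p * cnj (h p')) * (\<Sum>q\<in>S \<times> T.
        ((\<lambda>a. ?ce (fst p) a * cnj (?ce (fst p') a) / complex_of_real (w a)) (fst q) *
         (\<lambda>b. ?cf (snd p) b * cnj (?cf (snd p') b) / complex_of_real (v b)) (snd q)))"
        by (rule sum_distrib_left[symmetric])
      also have "\<dots> = h p * cnj (h p') *
      ((\<Sum>a\<in>S. ?ce (fst p) a * cnj (?ce (fst p') a) / complex_of_real (w a)) *
       (\<Sum>b\<in>T. ?cf (snd p) b * cnj (?cf (snd p') b) / complex_of_real (v b)))"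
        using sum_prod_split[where f="\<lambda>a. ?ce (fst p) a * cnj (?ce (fst p') a) / complex_of_real (w a)" and S=S
          and g="\<lambda>b. ?cf (snd p) b * cnj (?cf (snd p') b) / complex_of_real (v b)" and T=T] by simp
      finally show ?thesis .
    qed
    also have "\<dots> = h p * cnj (h p') * ((if fst p = fst p' then 1 else 0) * (if snd p = snd p' then 1 else 0))"
      using p p' by (simp add: O2[OF finS wpos onbE] O2[OF finT vpos onbF] mem_Times_iff)
    also have "\<dots> = (if p = p' then h p * cnj (h p) else 0)"
      by (cases p; cases p') auto
    finally show "(\<Sum>q\<in>S \<times> T. X p p' q) = (if p = p' then h p * cnj (h p) else 0)" .
  qed
  also have "\<dots> = (\<Sum>p\<in>eb \<times> fb. h p * cnj (h p))"
    using finE' finF' by (intro sum.cong refl) (simp add: if_distrib cong: if_cong)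
  finally show ?thesis .
qed

end


lemma weighted_CS:
  fixes x :: "'a \<Rightarrow> complex"
  assumes fin: "finite I" and u: "\<And>i. i \<in> I \<Longrightarrow> u i > 0"
  shows "(cmod (\<Sum>i\<in>I. x i))\<^sup>2 \<le> (\<Sum>i\<in>I. u i) * (\<Sum>i\<in>I. (cmod (x i))\<^sup>2 / u i)"
proof -
  have "cmod (\<Sum>i\<in>I. x i) \<le> (\<Sum>i\<in>I. cmod (x i))" by (rule norm_sum)
  hence "(cmod (\<Sum>i\<in>I. x i))\<^sup>2 \<le> (\<Sum>i\<in>I. cmod (x i))\<^sup>2"
    by (intro power_mono) auto
  also have "(\<Sum>i\<in>I. cmod (x i)) = (\<Sum>i\<in>I. sqrt (u i) * (cmod (x i) / sqrt (u i)))"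
    using u by (intro sum.cong refl) (simp add: less_imp_le, metis less_irrefl)
  also have "(\<dots>)\<^sup>2 \<le> (\<Sum>i\<in>I. (sqrt (u i))\<^sup>2) * (\<Sum>i\<in>I. (cmod (x i) / sqrt (u i))\<^sup>2)"
    by (rule Cauchy_Schwarz_ineq_sum)
  also have "\<dots> = (\<Sum>i\<in>I. u i) * (\<Sum>i\<in>I. (cmod (x i))\<^sup>2 / u i)"
    using u by (intro arg_cong2[where f="(*)"] sum.cong refl)
      (simp_all add: less_imp_le power_divide)
  finally show ?thesis .
qed

context
  fixes S T :: "(int^'n::finite) set" and w v :: "int^'n \<Rightarrow> real" and eb fb
  assumes finS: "finite S" and wpos: "\<And>a. a \<in> S \<Longrightarrow> w a > 0"
    and onbE: "is_onb (laurent_space S w) eb"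
  assumes finT: "finite T" and vpos: "\<And>a. a \<in> T \<Longrightarrow> v a > 0"
    and onbF: "is_onb (laurent_space T v) fb"
begin

lemma finST: "finite (S \<times> T)" using finS finT by simp
lemma finP: "finite (psum S T)" using finST by (simp add: psum_def)
lemma finEF: "finite (eb \<times> fb)"
  using eb_fin[OF finS wpos onbE] eb_fin[OF finT vpos onbF] by simp

lemma WWpos: "b \<in> psum S T \<Longrightarrow> WW S T w v b > 0"
proof -
  assume "b \<in> psum S T"
  then obtain q where q: "q \<in> S \<times> T" "fst q + snd q = b" by (auto simp: psum_def)
  show ?thesis unfolding WW_def
    using q finST wpos vpos
    by (intro sum_pos2[of _ q]) (auto simp: mem_Times_iff intro!: mult_nonneg_nonneg less_imp_le)
qed

lemma Nr: "(\<Sum>q\<in>S \<times> T. (cmod (KK S T eb fb h q))\<^sup>2 / (w (fst q) * v (snd q)))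
   = (\<Sum>p\<in>eb \<times> fb. (cmod (h p))\<^sup>2)"
proof -
  have "complex_of_real (\<Sum>q\<in>S \<times> T. (cmod (KK S T eb fb h q))\<^sup>2 / (w (fst q) * v (snd q)))
     = (\<Sum>q\<in>S \<times> T. KK S T eb fb h q * cnj (KK S T eb fb h q) / complex_of_real (w (fst q) * v (snd q)))"
    unfolding of_real_sum of_real_divide complex_norm_square of_real_mult ..
  also have "\<dots> = (\<Sum>p\<in>eb \<times> fb. h p * cnj (h p))" by (rule N[OF finS wpos onbE finT vpos onbF])
  also have "\<dots> = complex_of_real (\<Sum>p\<in>eb \<times> fb. (cmod (h p))\<^sup>2)"
    unfolding of_real_sum complex_norm_square ..
  finally show ?thesis by (simp only: of_real_eq_iff)
qed

lemma LB:
  assumes g: "fdelta eb fb h = laurent (psum S T) G"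
  shows "(\<Sum>b\<in>psum S T. (cmod (G b))\<^sup>2 / WW S T w v b) \<le> (\<Sum>p\<in>eb \<times> fb. (cmod (h p))\<^sup>2)"
proof -
  let ?K = "KK S T eb fb h" and ?\<sigma> = "\<lambda>q::(int^'n) \<times> (int^'n). fst q + snd q"
  have Gb: "G b = (\<Sum>q\<in>S \<times> T. if ?\<sigma> q = b then ?K q else 0)" if "b \<in> psum S T" for b
    using laurent_indep[OF finP trans[OF g[symmetric] D[OF finS wpos onbE finT vpos onbF]] that] .
  have each: "(cmod (G b))\<^sup>2 / WW S T w v b \<le> (\<Sum>q\<in>S \<times> T. if ?\<sigma> q = b then (cmod (?K q))\<^sup>2 / (w (fst q) * v (snd q)) else 0)"
    if b: "b \<in> psum S T" for b
  proof -
    let ?I = "{q \<in> S \<times> T. ?\<sigma> q = b}"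
    have finI: "finite ?I" using finST by simp
    have upos: "\<And>q. q \<in> ?I \<Longrightarrow> w (fst q) * v (snd q) > 0"
      using wpos vpos by (auto simp: mem_Times_iff)
    have "G b = (\<Sum>q\<in>?I. ?K q)" using Gb[OF b] finST by (simp add: sum.inter_filter)
    moreover have "WW S T w v b = (\<Sum>q\<in>?I. w (fst q) * v (snd q))"
      unfolding WW_def using finST by (simp add: sum.inter_filter)
    moreover have "(\<Sum>q\<in>S \<times> T. if ?\<sigma> q = b then (cmod (?K q))\<^sup>2 / (w (fst q) * v (snd q)) else 0)
       = (\<Sum>q\<in>?I. (cmod (?K q))\<^sup>2 / (w (fst q) * v (snd q)))"
      using finST by (simp add: sum.inter_filter)
    moreover have "(cmod (\<Sum>q\<in>?I. ?K q))\<^sup>2 \<le> (\<Sum>q\<in>?I. w (fst q) * v (snd q)) * (\<Sum>q\<in>?I. (cmod (?K q))\<^sup>2 / (w (fst q) * v (snd q)))"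
      by (rule weighted_CS[OF finI upos])
    ultimately show ?thesis using WWpos[OF b]
      by (simp add: divide_le_eq mult.commute)
  qed
  have "(\<Sum>b\<in>psum S T. (cmod (G b))\<^sup>2 / WW S T w v b)
     \<le> (\<Sum>b\<in>psum S T. \<Sum>q\<in>S \<times> T. if ?\<sigma> q = b then (cmod (?K q))\<^sup>2 / (w (fst q) * v (snd q)) else 0)"
    by (rule sum_mono) (rule each)
  also have "\<dots> = (\<Sum>q\<in>S \<times> T. (cmod (?K q))\<^sup>2 / (w (fst q) * v (snd q)))"
    unfolding psum_def by (rule sum_fibers[symmetric, OF finST])
  also have "\<dots> = (\<Sum>p\<in>eb \<times> fb. (cmod (h p))\<^sup>2)" by (rule Nr)
  finally show ?thesis .
qed

end


definition kst where
  "kst S T w v G q = G (fst q + snd q) * complex_of_real (w (fst q) * v (snd q) / WW S T w v (fst q + snd q))"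

definition hst where
  "hst S T w v G p = (\<Sum>q\<in>S \<times> T. kst S T w v G q * cnj (lcoeff S (fst p) (fst q)) * cnj (lcoeff T (snd p) (snd q))
      / complex_of_real (w (fst q) * v (snd q)))"

context
  fixes S T :: "(int^'n::finite) set" and w v :: "int^'n \<Rightarrow> real" and eb fb
  assumes finS: "finite S" and wpos: "\<And>a. a \<in> S \<Longrightarrow> w a > 0"
    and onbE: "is_onb (laurent_space S w) eb"
  assumes finT: "finite T" and vpos: "\<And>a. a \<in> T \<Longrightarrow> v a > 0"
    and onbF: "is_onb (laurent_space T v) fb"
begin

lemma K_hst:
  assumes x: "x \<in> S \<times> T"
  shows "KK S T eb fb (hst S T w v G) x = kst S T w v G x"
proof -
  let ?ce = "lcoeff S" and ?cf = "lcoeff T" and ?k = "kst S T w v G"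
  define c where "c q = ?k q / complex_of_real (w (fst q) * v (snd q))" for q
  have "KK S T eb fb (hst S T w v G) x
     = (\<Sum>p\<in>eb \<times> fb. \<Sum>q\<in>S \<times> T. c q * ((cnj (?ce (fst p) (fst q)) * ?ce (fst p) (fst x)) * (cnj (?cf (snd p) (snd q)) * ?cf (snd p) (snd x))))"
    unfolding KK_def hst_def sum_distrib_right
    by (intro sum.cong refl) (simp add: c_def field_simps)
  also have "\<dots> = (\<Sum>q\<in>S \<times> T. \<Sum>p\<in>eb \<times> fb. c q * ((cnj (?ce (fst p) (fst q)) * ?ce (fst p) (fst x)) * (cnj (?cf (snd p) (snd q)) * ?cf (snd p) (snd x))))"
    by (rule sum.swap)
  also have "\<dots> = (\<Sum>q\<in>S \<times> T. c q * ((\<Sum>e\<in>eb. cnj (?ce e (fst q)) * ?ce e (fst x)) * (\<Sum>f\<in>fb. cnj (?cf f (snd q)) * ?cf f (snd x))))"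
  proof (intro sum.cong refl)
    fix q
    show "(\<Sum>p\<in>eb \<times> fb. c q * ((cnj (?ce (fst p) (fst q)) * ?ce (fst p) (fst x)) * (cnj (?cf (snd p) (snd q)) * ?cf (snd p) (snd x))))
      = c q * ((\<Sum>e\<in>eb. cnj (?ce e (fst q)) * ?ce e (fst x)) * (\<Sum>f\<in>fb. cnj (?cf f (snd q)) * ?cf f (snd x)))"
      unfolding sum_distrib_left[symmetric]
      using sum_prod_split[where f="\<lambda>e. cnj (?ce e (fst q)) * ?ce e (fst x)" and S=eb
          and g="\<lambda>f. cnj (?cf f (snd q)) * ?cf f (snd x)" and T=fb] by simp
  qed
  also have "\<dots> = (\<Sum>q\<in>S \<times> T. if q = x then ?k x else 0)"
  proof (intro sum.cong refl)
    fix q assume q: "q \<in> S \<times> T"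
    have "(\<Sum>e\<in>eb. cnj (?ce e (fst q)) * ?ce e (fst x)) = (if fst q = fst x then complex_of_real (w (fst q)) else 0)"
      using q x by (intro O3[OF finS wpos onbE]) auto
    moreover have "(\<Sum>f\<in>fb. cnj (?cf f (snd q)) * ?cf f (snd x)) = (if snd q = snd x then complex_of_real (v (snd q)) else 0)"
      using q x by (intro O3[OF finT vpos onbF]) auto
    moreover have "w (fst q) > 0" "v (snd q) > 0" using q wpos vpos by auto
    ultimately show "c q * ((\<Sum>e\<in>eb. cnj (?ce e (fst q)) * ?ce e (fst x)) * (\<Sum>f\<in>fb. cnj (?cf f (snd q)) * ?cf f (snd x)))
       = (if q = x then ?k x else 0)"
      by (cases q; cases x) (auto simp: c_def)
  qed
  also have "\<dots> = ?k x" using x finS finT by simp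
  finally show ?thesis .
qed

lemma hst_delta: "fdelta eb fb (hst S T w v G) = laurent (psum S T) G"
proof -
  have "fdelta eb fb (hst S T w v G) = laurent (psum S T)
   (\<lambda>b. \<Sum>q\<in>S \<times> T. if fst q + snd q = b then KK S T eb fb (hst S T w v G) q else 0)"
    by (rule D[OF finS wpos onbE finT vpos onbF])
  also have "\<dots> = laurent (psum S T) G"
  proof (rule laurent_cong)
    fix b assume b: "b \<in> psum S T"
    have "(\<Sum>q\<in>S \<times> T. if fst q + snd q = b then KK S T eb fb (hst S T w v G) q else 0)
       = (\<Sum>q\<in>S \<times> T. if fst q + snd q = b then G b * complex_of_real (w (fst q) * v (snd q) / WW S T w v b) else 0)"
      by (intro sum.cong refl) (auto simp: K_hst kst_def)
    also have "\<dots> = G b * complex_of_real (WW S T w v b / WW S T w v b)"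
      unfolding WW_def sum_divide_distrib of_real_sum sum_distrib_left
      by (intro sum.cong refl) auto
    also have "\<dots> = G b" using WWpos[OF finS wpos onbE finT vpos onbF b] by simp
    finally show "(\<Sum>q\<in>S \<times> T. if fst q + snd q = b then KK S T eb fb (hst S T w v G) q else 0) = G b" .
  qed
  finally show ?thesis .
qed

lemma hst_norm: "(\<Sum>p\<in>eb \<times> fb. (cmod (hst S T w v G p))\<^sup>2) = (\<Sum>b\<in>psum S T. (cmod (G b))\<^sup>2 / WW S T w v b)"
proof -
  let ?\<sigma> = "\<lambda>q::(int^'n) \<times> (int^'n). fst q + snd q"
  have "(\<Sum>p\<in>eb \<times> fb. (cmod (hst S T w v G p))\<^sup>2)
      = (\<Sum>q\<in>S \<times> T. (cmod (KK S T eb fb (hst S T w v G) q))\<^sup>2 / (w (fst q) * v (snd q)))"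
    by (rule Nr[OF finS wpos onbE finT vpos onbF, symmetric])
  also have "\<dots> = (\<Sum>q\<in>S \<times> T. (cmod (G (?\<sigma> q)))\<^sup>2 * (w (fst q) * v (snd q)) / (WW S T w v (?\<sigma> q))\<^sup>2)"
  proof (intro sum.cong refl)
    fix q assume q: "q \<in> S \<times> T"
    have wv: "w (fst q) * v (snd q) > 0" using q wpos vpos by auto
    have W: "WW S T w v (?\<sigma> q) > 0" using q by (intro WWpos[OF finS wpos onbE finT vpos onbF]) (auto simp: psum_def)
    show "(cmod (KK S T eb fb (hst S T w v G) q))\<^sup>2 / (w (fst q) * v (snd q))
        = (cmod (G (?\<sigma> q)))\<^sup>2 * (w (fst q) * v (snd q)) / (WW S T w v (?\<sigma> q))\<^sup>2"
    proof -
      have "cmod (KK S T eb fb (hst S T w v G) q) = cmod (G (?\<sigma> q)) * (w (fst q) * v (snd q) / WW S T w v (?\<sigma> q))"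
        unfolding K_hst[OF q] kst_def norm_mult norm_of_real using wv W by simp
      thus ?thesis using wv W by (simp add: power_mult_distrib power2_eq_square field_simps)
    qed
  qed
  also have "\<dots> = (\<Sum>b\<in>psum S T. \<Sum>q\<in>S \<times> T. if ?\<sigma> q = b then (cmod (G b))\<^sup>2 * (w (fst q) * v (snd q)) / (WW S T w v b)\<^sup>2 else 0)"
    unfolding psum_def
    by (subst sum_fibers[where \<sigma>="?\<sigma>"]) (use finS finT in \<open>auto intro!: sum.cong\<close>)
  also have "\<dots> = (\<Sum>b\<in>psum S T. (cmod (G b))\<^sup>2 / WW S T w v b)"
  proof (intro sum.cong refl)
    fix b assume b: "b \<in> psum S T"
    have W: "WW S T w v b > 0" by (rule WWpos[OF finS wpos onbE finT vpos onbF b])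
    have "(\<Sum>q\<in>S \<times> T. if ?\<sigma> q = b then (cmod (G b))\<^sup>2 * (w (fst q) * v (snd q)) / (WW S T w v b)\<^sup>2 else 0)
        = (cmod (G b))\<^sup>2 * WW S T w v b / (WW S T w v b)\<^sup>2"
      unfolding WW_def sum_distrib_left sum_divide_distrib by (intro sum.cong refl) auto
    also have "\<dots> = (cmod (G b))\<^sup>2 / WW S T w v b" using W by (simp add: power2_eq_square)
    finally show "(\<Sum>q\<in>S \<times> T. if ?\<sigma> q = b then (cmod (G b))\<^sup>2 * (w (fst q) * v (snd q)) / (WW S T w v b)\<^sup>2 else 0)
        = (cmod (G b))\<^sup>2 / WW S T w v b" .
  qed
  finally show ?thesis .
qed

end


lemma polar:
  fixes a b :: complex
  shows "(complex_of_real ((cmod (a + b))\<^sup>2) - complex_of_real ((cmod (a - b))\<^sup>2)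
     + \<i> * complex_of_real ((cmod (a + \<i> * b))\<^sup>2) - \<i> * complex_of_real ((cmod (a - \<i> * b))\<^sup>2)) / 4
    = a * cnj b"
  unfolding complex_norm_square by (simp add: algebra_simps)

definition Qf :: "(int^'n) set \<Rightarrow> (int^'n \<Rightarrow> real) \<Rightarrow> (complex^'n \<Rightarrow> complex) \<Rightarrow> real" where
  "Qf P W g = (\<Sum>b\<in>P. (cmod (lcoeff P g b))\<^sup>2 / W b)"

context
  fixes S T :: "(int^'n::finite) set" and w v :: "int^'n \<Rightarrow> real"
  assumes finS: "finite S" and wpos: "\<And>a. a \<in> S \<Longrightarrow> w a > 0"
  assumes finT: "finite T" and vpos: "\<And>a. a \<in> T \<Longrightarrow> v a > 0"
begin

abbreviation "eb0 \<equiv> (SOME B. is_onb (laurent_space S w) B)"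
abbreviation "fb0 \<equiv> (SOME B. is_onb (laurent_space T v) B)"

lemma onbE0: "is_onb (laurent_space S w) eb0"
  by (rule someI, rule onb_exists[OF finS wpos])
lemma onbF0: "is_onb (laurent_space T v) fb0"
  by (rule someI, rule onb_exists[OF finT vpos])

lemmas asm = finS wpos onbE0 finT vpos onbF0

lemma carrier: "{fdelta eb0 fb0 h | h. True} = fst (laurent_space (psum S T) (WW S T w v))"
proof (intro equalityI subsetI)
  fix g assume "g \<in> {fdelta eb0 fb0 h | h. True}"
  then obtain h where "g = fdelta eb0 fb0 h" by auto
  thus "g \<in> fst (laurent_space (psum S T) (WW S T w v))"
    using D[OF asm, of h] by (auto simp: laurent_space_fst)
next
  fix g assume "g \<in> fst (laurent_space (psum S T) (WW S T w v))"
  then obtain G where "g = laurent (psum S T) G" by (auto simp: laurent_space_fst)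
  thus "g \<in> {fdelta eb0 fb0 h | h. True}" using hst_delta[OF asm, of G] by (metis (mono_tags, lifting) mem_Collect_eq)
qed

lemma normeq:
  assumes g: "g = laurent (psum S T) G"
  shows "fprod_norm (laurent_space S w) (laurent_space T v) g = sqrt (\<Sum>b\<in>psum S T. (cmod (G b))\<^sup>2 / WW S T w v b)"
proof -
  let ?X = "{sqrt (\<Sum>p\<in>eb0 \<times> fb0. (cmod (h p))\<^sup>2) | h. fdelta eb0 fb0 h = g}"
  have "fprod_norm (laurent_space S w) (laurent_space T v) g = Inf ?X"
    unfolding fprod_norm_def Let_def ..
  also have "Inf ?X = sqrt (\<Sum>b\<in>psum S T. (cmod (G b))\<^sup>2 / WW S T w v b)"
  proof (rule cInf_eq_minimum)
    show "sqrt (\<Sum>b\<in>psum S T. (cmod (G b))\<^sup>2 / WW S T w v b) \<in> ?X"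
      using hst_delta[OF asm, of G] hst_norm[OF asm, of G] g by (auto intro!: exI[of _ "hst S T w v G"])
  next
    fix x assume "x \<in> ?X"
    then obtain h where h: "x = sqrt (\<Sum>p\<in>eb0 \<times> fb0. (cmod (h p))\<^sup>2)" "fdelta eb0 fb0 h = g" by auto
    show "sqrt (\<Sum>b\<in>psum S T. (cmod (G b))\<^sup>2 / WW S T w v b) \<le> x"
      unfolding h(1) using LB[OF asm, of h G] h(2) g by simp
  qed
  finally show ?thesis .
qed

lemma fprod_laurent:
  "fst (fprod (laurent_space S w) (laurent_space T v)) = fst (laurent_space (psum S T) (WW S T w v))
   \<and> (\<forall>f\<in>fst (fprod (laurent_space S w) (laurent_space T v)). \<forall>g\<in>fst (fprod (laurent_space S w) (laurent_space T v)).
        snd (fprod (laurent_space S w) (laurent_space T v)) f g = snd (laurent_space (psum S T) (WW S T w v)) f g)"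
proof -
  let ?E = "laurent_space S w" and ?F = "laurent_space T v" and ?R = "laurent_space (psum S T) (WW S T w v)"
  let ?N = "fprod_norm ?E ?F" and ?W = "WW S T w v" and ?P = "psum S T"
  have fstP: "fst (fprod ?E ?F) = fst ?R"
    unfolding fprod_def Let_def using carrier by simp
  have finP: "finite ?P" by (simp add: psum_def finS finT)
  have Wpos: "\<And>b. b \<in> ?P \<Longrightarrow> ?W b > 0" by (rule WWpos[OF asm])
  have Nsq: "complex_of_real ((?N (laurent ?P G))\<^sup>2) = (\<Sum>b\<in>?P. complex_of_real ((cmod (G b))\<^sup>2) / complex_of_real (?W b))" for G
  proof -
    have "(?N (laurent ?P G))\<^sup>2 = (\<Sum>b\<in>?P. (cmod (G b))\<^sup>2 / ?W b)"
      unfolding normeq[OF refl] using Wpos by (intro real_sqrt_pow2 sum_nonneg) (auto intro!: divide_nonneg_pos)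
    thus ?thesis by simp
  qed
  have inner: "snd (fprod ?E ?F) f g = snd ?R f g" if f: "f \<in> fst ?R" and g: "g \<in> fst ?R" for f g
  proof -
    obtain F where F: "f = laurent ?P F" using f by (auto simp: laurent_space_fst)
    obtain G where G: "g = laurent ?P G" using g by (auto simp: laurent_space_fst)
    have e1: "(\<lambda>x. f x + g x) = laurent ?P (\<lambda>b. F b + G b)" unfolding F G by (intro ext laurent_add)
    have e2: "(\<lambda>x. f x - g x) = laurent ?P (\<lambda>b. F b - G b)" unfolding F G by (intro ext laurent_diff)
    have e3: "(\<lambda>x. f x + \<i> * g x) = laurent ?P (\<lambda>b. F b + \<i> * G b)"
      unfolding F G by (intro ext) (simp add: laurent_smult laurent_add)
    have e4: "(\<lambda>x. f x - \<i> * g x) = laurent ?P (\<lambda>b. F b - \<i> * G b)"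
      unfolding F G by (intro ext) (simp add: laurent_smult laurent_diff)
    have "snd (fprod ?E ?F) f g =
      ((complex_of_real ((?N (\<lambda>x. f x + g x))\<^sup>2) - complex_of_real ((?N (\<lambda>x. f x - g x))\<^sup>2))
              + \<i> * complex_of_real ((?N (\<lambda>x. f x + \<i> * g x))\<^sup>2)
              - \<i> * complex_of_real ((?N (\<lambda>x. f x - \<i> * g x))\<^sup>2)) / 4"
      unfolding fprod_def Let_def by simp
    also have "\<dots> = (\<Sum>b\<in>?P. ((complex_of_real ((cmod (F b + G b))\<^sup>2) - complex_of_real ((cmod (F b - G b))\<^sup>2)
     + \<i> * complex_of_real ((cmod (F b + \<i> * G b))\<^sup>2) - \<i> * complex_of_real ((cmod (F b - \<i> * G b))\<^sup>2)) / 4) / complex_of_real (?W b))"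
      unfolding e1 e2 e3 e4 Nsq
      by (simp add: sum_subtractf sum.distrib sum_distrib_left sum_divide_distrib diff_divide_distrib add_divide_distrib
          algebra_simps)
    also have "\<dots> = (\<Sum>b\<in>?P. F b * cnj (G b) / complex_of_real (?W b))"
      by (simp only: polar)
    also have "\<dots> = snd ?R f g"
      unfolding laurent_space_snd F G using finP by (intro sum.cong refl) (simp add: lcoeff_laurent)
    finally show ?thesis .
  qed
  show ?thesis using fstP inner by auto
qed

end


definition eqv :: "'x fsp \<Rightarrow> 'x fsp \<Rightarrow> bool" where
  "eqv E R \<longleftrightarrow> fst E = fst R \<and> (\<forall>f\<in>fst E. \<forall>g\<in>fst E. snd E f g = snd R f g)"

lemma eqv_onb: "eqv E R \<Longrightarrow> is_onb E = is_onb R"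
  unfolding eqv_def is_onb_def by (intro ext) (auto simp: subset_iff)

lemma fprod_cong: "is_onb E = is_onb E' \<Longrightarrow> is_onb F = is_onb F' \<Longrightarrow> fprod E F = fprod E' F'"
  unfolding fprod_def fprod_norm_def by simp

definition cnt :: "'t set \<Rightarrow> ('t \<Rightarrow> int^'n) \<Rightarrow> int^'n \<Rightarrow> real" where
  "cnt T \<sigma> b = (\<Sum>t\<in>T. if \<sigma> t = b then 1 else 0)"

definition Inv :: "(complex^'n) fsp \<Rightarrow> 't set \<Rightarrow> ('t \<Rightarrow> int^'n) \<Rightarrow> bool" where
  "Inv E T \<sigma> \<longleftrightarrow> finite T \<and> eqv E (laurent_space (\<sigma> ` T) (cnt T \<sigma>))"

lemma cnt_pos: "finite T \<Longrightarrow> b \<in> \<sigma> ` T \<Longrightarrow> cnt T \<sigma> b > 0"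
proof -
  assume fin: "finite T" and b: "b \<in> \<sigma> ` T"
  then obtain t where t: "t \<in> T" "\<sigma> t = b" by auto
  show ?thesis unfolding cnt_def
    by (rule sum_pos2[OF fin t(1)]) (simp_all add: t(2))
qed

lemma eqv_trans_eq: "eqv E R \<Longrightarrow> R = R' \<Longrightarrow> eqv E R'" by simp

lemma Inv_base:
  fixes A :: "(int^'n::finite) set"
  assumes "finite A"
  shows "Inv (laurent_space A (\<lambda>_. 1)) A id"
proof -
  have "laurent_space A (cnt A id) = laurent_space A (\<lambda>_. 1)"
  proof (rule laurent_space_weights)
    fix a assume "a \<in> A"
    thus "cnt A id a = 1" unfolding cnt_def using assms by (simp add: sum.delta')
  qed
  thus ?thesis using assms by (simp add: Inv_def eqv_def)
qed

lemma Inv_relabel: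
  assumes I: "Inv E T \<sigma>" and bij: "bij_betw \<phi> T T'" and s: "\<And>t. t \<in> T \<Longrightarrow> \<sigma>' (\<phi> t) = \<sigma> t"
  shows "Inv E T' \<sigma>'"
proof -
  have img: "\<sigma>' ` T' = \<sigma> ` T"
    using bij s unfolding bij_betw_def by (auto simp: image_comp[symmetric]) (metis image_eqI)
  have c: "cnt T' \<sigma>' = cnt T \<sigma>"
  proof
    fix b
    show "cnt T' \<sigma>' b = cnt T \<sigma> b"
      unfolding cnt_def using s by (subst sum.reindex_bij_betw[OF bij, symmetric]) (auto intro!: sum.cong)
  qed
  show ?thesis using I bij img c by (simp add: Inv_def bij_betw_finite)
qed

lemma Inv_prod:
  fixes E F :: "(complex^'n::finite) fsp"
  assumes I1: "Inv E T1 \<sigma>1" and I2: "Inv F T2 \<sigma>2"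
  shows "Inv (fprod E F) (T1 \<times> T2) (\<lambda>p. \<sigma>1 (fst p) + \<sigma>2 (snd p))"
proof -
  let ?S1 = "\<sigma>1 ` T1" and ?S2 = "\<sigma>2 ` T2" and ?w = "cnt T1 \<sigma>1" and ?v = "cnt T2 \<sigma>2"
  let ?\<sigma> = "\<lambda>p. \<sigma>1 (fst p) + \<sigma>2 (snd p)"
  have f1: "finite T1" and f2: "finite T2" using I1 I2 by (auto simp: Inv_def)
  have e1: "eqv E (laurent_space ?S1 ?w)" and e2: "eqv F (laurent_space ?S2 ?v)"
    using I1 I2 by (auto simp: Inv_def)
  have fp: "fprod E F = fprod (laurent_space ?S1 ?w) (laurent_space ?S2 ?v)"
    by (intro fprod_cong eqv_onb e1 e2)
  have main: "eqv (fprod (laurent_space ?S1 ?w) (laurent_space ?S2 ?v)) (laurent_space (psum ?S1 ?S2) (WW ?S1 ?S2 ?w ?v))"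
    unfolding eqv_def
    by (rule fprod_laurent) (use f1 f2 cnt_pos in auto)
  have ps: "psum ?S1 ?S2 = ?\<sigma> ` (T1 \<times> T2)"
    unfolding psum_def by (auto simp: image_iff) (metis fst_conv snd_conv)+
  have ww: "WW ?S1 ?S2 ?w ?v b = cnt (T1 \<times> T2) ?\<sigma> b" for b
  proof -
    have "WW ?S1 ?S2 ?w ?v b = (\<Sum>q\<in>?S1 \<times> ?S2. \<Sum>t1\<in>T1. \<Sum>t2\<in>T2.
        if fst q + snd q = b \<and> \<sigma>1 t1 = fst q \<and> \<sigma>2 t2 = snd q then 1 else 0)"
      unfolding WW_def cnt_def
      by (intro sum.cong refl) (auto simp: sum_product sum.If_cases[symmetric] intro!: sum.cong)
    also have "\<dots> = (\<Sum>t1\<in>T1. \<Sum>t2\<in>T2. \<Sum>q\<in>?S1 \<times> ?S2.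
        if fst q + snd q = b \<and> \<sigma>1 t1 = fst q \<and> \<sigma>2 t2 = snd q then 1 else 0)"
      by (subst sum.swap) (intro sum.cong refl sum.swap)
    also have "\<dots> = (\<Sum>t1\<in>T1. \<Sum>t2\<in>T2. if \<sigma>1 t1 + \<sigma>2 t2 = b then 1 else 0)"
    proof (intro sum.cong refl)
      fix t1 t2 assume t: "t1 \<in> T1" "t2 \<in> T2"
      have "(\<Sum>q\<in>?S1 \<times> ?S2. if fst q + snd q = b \<and> \<sigma>1 t1 = fst q \<and> \<sigma>2 t2 = snd q then 1 else 0)
          = (\<Sum>q\<in>?S1 \<times> ?S2. if q = (\<sigma>1 t1, \<sigma>2 t2) then (if \<sigma>1 t1 + \<sigma>2 t2 = b then 1 else 0) else (0::real))"
        by (intro sum.cong refl) auto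
      also have "\<dots> = (if \<sigma>1 t1 + \<sigma>2 t2 = b then 1 else 0)"
        using t f1 f2 by (simp add: sum.delta')
      finally show "(\<Sum>q\<in>?S1 \<times> ?S2. if fst q + snd q = b \<and> \<sigma>1 t1 = fst q \<and> \<sigma>2 t2 = snd q then 1 else (0::real))
          = (if \<sigma>1 t1 + \<sigma>2 t2 = b then 1 else 0)" .
    qed
    also have "\<dots> = cnt (T1 \<times> T2) ?\<sigma> b"
      unfolding cnt_def by (subst sum.cartesian_product) (simp add: case_prod_beta)
    finally show ?thesis .
  qed
  have "laurent_space (psum ?S1 ?S2) (WW ?S1 ?S2 ?w ?v) = laurent_space (?\<sigma> ` (T1 \<times> T2)) (cnt (T1 \<times> T2) ?\<sigma>)"
    unfolding ps ww ..
  thus ?thesis using main fp f1 f2 by (simp add: Inv_def)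
qed



definition Lk :: "'n \<Rightarrow> nat \<Rightarrow> 'n \<Rightarrow> nat" where
  "Lk i k = (\<lambda>i'. if i' = i then k else 0)"

lemma tuples_iff: "t \<in> tuples A L \<longleftrightarrow> (\<forall>i. \<forall>j<L i. t i j \<in> A i) \<and> (\<forall>i j. L i \<le> j \<longrightarrow> t i j = 0)"
  by (simp add: tuples_def)

lemma tsum_Lk: "tsum (Lk i k) t = (\<Sum>j<k. t i j)"
proof -
  have "tsum (Lk i k) t = (\<Sum>i'\<in>UNIV. if i' = i then (\<Sum>j<k. t i j) else 0)"
    unfolding tsum_def by (intro sum.cong refl) (simp add: Lk_def)
  also have "\<dots> = (\<Sum>j<k. t i j)" by simp
  finally show ?thesis .
qed

lemma Inv_pow_base:
  fixes A :: "'n::finite \<Rightarrow> (int^'n) set"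
  assumes fin: "finite (A i)"
  shows "Inv (laurent_space (A i) (\<lambda>_. 1)) (tuples A (Lk i 1)) (tsum (Lk i 1))"
proof (rule Inv_relabel[OF Inv_base[OF fin]])
  define \<phi> where "\<phi> a = (\<lambda>i' (j::nat). if i' = i \<and> j = 0 then a else (0::int^'n))" for a
  show "bij_betw \<phi> (A i) (tuples A (Lk i 1))"
  proof (rule bij_betw_byWitness[where f'="\<lambda>t. t i 0"])
    show "\<forall>a\<in>A i. \<phi> a i 0 = a" by (simp add: \<phi>_def)
    show "\<forall>t\<in>tuples A (Lk i 1). \<phi> (t i 0) = t"
    proof
      fix t assume t: "t \<in> tuples A (Lk i 1)"
      show "\<phi> (t i 0) = t"
      proof (intro ext)
        fix i' j
        show "\<phi> (t i 0) i' j = t i' j"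
          using t by (cases "i' = i \<and> j = 0") (auto simp: \<phi>_def tuples_iff Lk_def)
      qed
    qed
    show "\<phi> ` A i \<subseteq> tuples A (Lk i 1)" by (auto simp: \<phi>_def tuples_iff Lk_def)
    show "(\<lambda>t. t i 0) ` tuples A (Lk i 1) \<subseteq> A i" by (auto simp: tuples_iff Lk_def)
  qed
  show "\<And>a. a \<in> A i \<Longrightarrow> tsum (Lk i 1) (\<phi> a) = id a"
    by (simp add: tsum_Lk \<phi>_def)
qed

lemma Inv_pow:
  fixes A :: "'n::finite \<Rightarrow> (int^'n) set"
  assumes fin: "finite (A i)"
  shows "Inv (fpow (laurent_space (A i) (\<lambda>_. 1)) (Suc m)) (tuples A (Lk i (Suc m))) (tsum (Lk i (Suc m)))"
proof (induction m)
  case 0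
  thus ?case using Inv_pow_base[of A i, OF fin] by simp
next
  case (Suc m)
  let ?F = "laurent_space (A i) (\<lambda>_. 1)"
  have P: "Inv (fprod (fpow ?F (Suc m)) ?F) (tuples A (Lk i (Suc m)) \<times> A i)
     (\<lambda>p. tsum (Lk i (Suc m)) (fst p) + id (snd p))"
    by (rule Inv_prod[OF Suc.IH Inv_base[OF fin]])
  define \<phi> where "\<phi> p = (fst p)(i := (fst p i)(Suc m := snd p))" for p :: "('n \<Rightarrow> nat \<Rightarrow> int^'n) \<times> (int^'n)"
  have bij: "bij_betw \<phi> (tuples A (Lk i (Suc m)) \<times> A i) (tuples A (Lk i (Suc (Suc m))))"
  proof (rule bij_betw_byWitness[where f'="\<lambda>t. (t(i := (t i)(Suc m := 0)), t i (Suc m))"])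
    show "\<forall>p\<in>tuples A (Lk i (Suc m)) \<times> A i. ((\<phi> p)(i := (\<phi> p i)(Suc m := 0)), \<phi> p i (Suc m)) = p"
    proof
      fix p assume p: "p \<in> tuples A (Lk i (Suc m)) \<times> A i"
      obtain t a where pa: "p = (t, a)" by (cases p)
      have t0: "t i (Suc m) = 0" using p pa by (auto simp: tuples_iff Lk_def)
      have "t(i := (t i)(Suc m := 0)) = t"
        using t0 by (intro ext) auto
      thus "((\<phi> p)(i := (\<phi> p i)(Suc m := 0)), \<phi> p i (Suc m)) = p"
        by (simp add: pa \<phi>_def)
    qed
    show "\<forall>t\<in>tuples A (Lk i (Suc (Suc m))). \<phi> (t(i := (t i)(Suc m := 0)), t i (Suc m)) = t"
      by (auto simp: \<phi>_def)
    show "\<phi> ` (tuples A (Lk i (Suc m)) \<times> A i) \<subseteq> tuples A (Lk i (Suc (Suc m)))"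
    proof
      fix t' assume "t' \<in> \<phi> ` (tuples A (Lk i (Suc m)) \<times> A i)"
      then obtain t a where t: "t \<in> tuples A (Lk i (Suc m))" "a \<in> A i" "t' = \<phi> (t, a)" by auto
      show "t' \<in> tuples A (Lk i (Suc (Suc m)))"
        unfolding tuples_iff
      proof (intro conjI allI impI)
        fix i' j assume j: "j < Lk i (Suc (Suc m)) i'"
        show "t' i' j \<in> A i'"
          using t j by (cases "i' = i"; cases "j = Suc m") (auto simp: \<phi>_def tuples_iff Lk_def)
      next
        fix i' j assume j: "Lk i (Suc (Suc m)) i' \<le> j"
        show "t' i' j = 0"
          using t j by (cases "i' = i"; cases "j = Suc m") (auto simp: \<phi>_def tuples_iff Lk_def)
      qed
    qed
    show "(\<lambda>t. (t(i := (t i)(Suc m := 0)), t i (Suc m))) ` tuples A (Lk i (Suc (Suc m)))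
        \<subseteq> tuples A (Lk i (Suc m)) \<times> A i"
    proof
      fix p assume "p \<in> (\<lambda>t. (t(i := (t i)(Suc m := 0)), t i (Suc m))) ` tuples A (Lk i (Suc (Suc m)))"
      then obtain t where t: "t \<in> tuples A (Lk i (Suc (Suc m)))" "p = (t(i := (t i)(Suc m := 0)), t i (Suc m))" by auto
      have "t(i := (t i)(Suc m := 0)) \<in> tuples A (Lk i (Suc m))"
        unfolding tuples_iff
      proof (intro conjI allI impI)
        fix i' j assume j: "j < Lk i (Suc m) i'"
        show "(t(i := (t i)(Suc m := 0))) i' j \<in> A i'"
          using t j by (cases "i' = i") (auto simp: tuples_iff Lk_def)
      next
        fix i' j assume j: "Lk i (Suc m) i' \<le> j"
        show "(t(i := (t i)(Suc m := 0))) i' j = 0"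
          using t j by (cases "i' = i"; cases "j = Suc m") (auto simp: tuples_iff Lk_def)
      qed
      moreover have "t i (Suc m) \<in> A i" using t by (auto simp: tuples_iff Lk_def)
      ultimately show "p \<in> tuples A (Lk i (Suc m)) \<times> A i" using t by simp
    qed
  qed
  have s: "tsum (Lk i (Suc (Suc m))) (\<phi> p) = tsum (Lk i (Suc m)) (fst p) + id (snd p)"
    if "p \<in> tuples A (Lk i (Suc m)) \<times> A i" for p
    by (simp add: tsum_Lk \<phi>_def)
  have "Inv (fprod (fpow ?F (Suc m)) ?F) (tuples A (Lk i (Suc (Suc m)))) (tsum (Lk i (Suc (Suc m))))"
    by (rule Inv_relabel[OF P bij]) (simp add: s)
  thus ?case by simp
qed



lemma Inv_join:
  fixes A :: "'n::finite \<Rightarrow> (int^'n) set"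
  assumes IE: "Inv E (tuples A L) (tsum L)" and IF: "Inv F (tuples A (Lk y k)) (tsum (Lk y k))"
    and Ly: "L y = 0"
  shows "Inv (fprod E F) (tuples A (L(y := k))) (tsum (L(y := k)))"
proof -
  let ?L1 = "L(y := k)"
  have P: "Inv (fprod E F) (tuples A L \<times> tuples A (Lk y k)) (\<lambda>p. tsum L (fst p) + tsum (Lk y k) (snd p))"
    by (rule Inv_prod[OF IE IF])
  define \<phi> where "\<phi> p = (\<lambda>i j. fst p i j + snd p i j)"
    for p :: "('n \<Rightarrow> nat \<Rightarrow> int^'n) \<times> ('n \<Rightarrow> nat \<Rightarrow> int^'n)"
  have bij: "bij_betw \<phi> (tuples A L \<times> tuples A (Lk y k)) (tuples A ?L1)"
  proof (rule bij_betw_byWitness[where f'="\<lambda>t. (\<lambda>i j. if i = y then 0 else t i j, \<lambda>i j. if i = y then t i j else 0)"])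
    show "\<forall>p\<in>tuples A L \<times> tuples A (Lk y k).
      (\<lambda>i j. if i = y then 0 else \<phi> p i j, \<lambda>i j. if i = y then \<phi> p i j else 0) = p"
    proof
      fix p assume p: "p \<in> tuples A L \<times> tuples A (Lk y k)"
      obtain t1 t2 where pa: "p = (t1, t2)" by (cases p)
      have z1: "t1 y j = 0" for j using p pa Ly by (auto simp: tuples_iff)
      have z2: "i \<noteq> y \<Longrightarrow> t2 i j = 0" for i j using p pa by (auto simp: tuples_iff Lk_def)
      have "(\<lambda>i j. if i = y then 0 else t1 i j + t2 i j) = t1"
        using z1 z2 by (intro ext) auto
      moreover have "(\<lambda>i j. if i = y then t1 i j + t2 i j else 0) = t2"
        using z1 z2 by (intro ext) auto
      ultimately show "(\<lambda>i j. if i = y then 0 else \<phi> p i j, \<lambda>i j. if i = y then \<phi> p i j else 0) = p"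
        unfolding pa \<phi>_def fst_conv snd_conv prod.inject by (rule conjI)
    qed
    show "\<forall>t\<in>tuples A ?L1. \<phi> (\<lambda>i j. if i = y then 0 else t i j, \<lambda>i j. if i = y then t i j else 0) = t"
      by (auto simp: \<phi>_def intro!: ext)
    show "\<phi> ` (tuples A L \<times> tuples A (Lk y k)) \<subseteq> tuples A ?L1"
    proof
      fix t assume "t \<in> \<phi> ` (tuples A L \<times> tuples A (Lk y k))"
      then obtain t1 t2 where t: "t1 \<in> tuples A L" "t2 \<in> tuples A (Lk y k)" "t = \<phi> (t1, t2)" by auto
      have z1: "t1 y j = 0" for j using t Ly by (auto simp: tuples_iff)
      have z2: "i \<noteq> y \<Longrightarrow> t2 i j = 0" for i j using t by (auto simp: tuples_iff Lk_def)
      show "t \<in> tuples A ?L1"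
        unfolding tuples_iff
      proof (intro conjI allI impI)
        fix i j assume j: "j < ?L1 i"
        show "t i j \<in> A i"
          using t j z1 z2 by (cases "i = y") (auto simp: \<phi>_def tuples_iff Lk_def)
      next
        fix i j assume j: "?L1 i \<le> j"
        show "t i j = 0"
          using t j z1 z2 by (cases "i = y") (auto simp: \<phi>_def tuples_iff Lk_def)
      qed
    qed
    show "(\<lambda>t. (\<lambda>i j. if i = y then 0 else t i j, \<lambda>i j. if i = y then t i j else 0)) ` tuples A ?L1
      \<subseteq> tuples A L \<times> tuples A (Lk y k)"
    proof
      fix p assume "p \<in> (\<lambda>t. (\<lambda>i j. if i = y then 0 else t i j, \<lambda>i j. if i = y then t i j else 0)) ` tuples A ?L1"
      then obtain t where t: "t \<in> tuples A ?L1" "p = (\<lambda>i j. if i = y then 0 else t i j, \<lambda>i j. if i = y then t i j else 0)"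
        by auto
      have "(\<lambda>i j. if i = y then 0 else t i j) \<in> tuples A L"
        using t(1) Ly unfolding tuples_iff by auto
      moreover have "(\<lambda>i j. if i = y then t i j else 0) \<in> tuples A (Lk y k)"
        using t(1) unfolding tuples_iff by (auto simp: Lk_def)
      ultimately show "p \<in> tuples A L \<times> tuples A (Lk y k)" using t(2) by simp
    qed
  qed
  have s: "tsum ?L1 (\<phi> p) = tsum L (fst p) + tsum (Lk y k) (snd p)"
    if p: "p \<in> tuples A L \<times> tuples A (Lk y k)" for p
  proof -
    obtain t1 t2 where pa: "p = (t1, t2)" by (cases p)
    have z1: "t1 y j = 0" for j using p pa Ly by (auto simp: tuples_iff)
    have z2: "i \<noteq> y \<Longrightarrow> t2 i j = 0" for i j using p pa by (auto simp: tuples_iff Lk_def)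
    have a: "(\<Sum>j<?L1 i. t1 i j) = (\<Sum>j<L i. t1 i j)" for i
      using z1 Ly by (cases "i = y") auto
    have b: "(\<Sum>j<?L1 i. t2 i j) = (\<Sum>j<Lk y k i. t2 i j)" for i
      using z2 by (cases "i = y") (auto simp: Lk_def)
    have "tsum ?L1 (\<phi> p) = (\<Sum>i\<in>UNIV. (\<Sum>j<?L1 i. t1 i j) + (\<Sum>j<?L1 i. t2 i j))"
      unfolding tsum_def \<phi>_def pa by (simp add: sum.distrib)
    also have "\<dots> = tsum L t1 + tsum (Lk y k) t2"
      unfolding tsum_def a b by (simp add: sum.distrib)
    finally show ?thesis by (simp add: pa)
  qed
  show ?thesis by (rule Inv_relabel[OF P bij]) (simp add: s)
qed

lemma Inv_list:
  fixes A :: "'n::finite \<Rightarrow> (int^'n) set" and lam :: "'n \<Rightarrow> nat"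
  assumes fin: "\<And>i. finite (A i)" and pos: "\<And>i. lam i > 0"
  shows "distinct ys \<Longrightarrow> Inv E (tuples A L) (tsum L) \<Longrightarrow> (\<forall>y\<in>set ys. L y = 0) \<Longrightarrow>
    Inv (fprod_list (E # map (\<lambda>i. fpow (laurent_space (A i) (\<lambda>_. 1)) (lam i)) ys))
      (tuples A (\<lambda>i. if i \<in> set ys then lam i else L i)) (tsum (\<lambda>i. if i \<in> set ys then lam i else L i))"
proof (induction ys arbitrary: E L)
  case Nil
  thus ?case by simp
next
  case (Cons y ys)
  let ?P = "\<lambda>i. fpow (laurent_space (A i) (\<lambda>_. 1)) (lam i)"
  obtain m where m: "lam y = Suc m" using pos[of y] by (cases "lam y") auto
  have IF: "Inv (?P y) (tuples A (Lk y (lam y))) (tsum (Lk y (lam y)))"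
    using Inv_pow[of A y m, OF fin] by (simp add: m)
  have J: "Inv (fprod E (?P y)) (tuples A (L(y := lam y))) (tsum (L(y := lam y)))"
    by (rule Inv_join[OF Cons.prems(2) IF]) (use Cons.prems(3) in simp)
  have IH: "Inv (fprod_list (fprod E (?P y) # map ?P ys))
      (tuples A (\<lambda>i. if i \<in> set ys then lam i else (L(y := lam y)) i))
      (tsum (\<lambda>i. if i \<in> set ys then lam i else (L(y := lam y)) i))"
    by (rule Cons.IH[OF _ J]) (use Cons.prems in auto)
  have eq: "(\<lambda>i. if i \<in> set ys then lam i else (L(y := lam y)) i) = (\<lambda>i. if i \<in> set (y # ys) then lam i else L i)"
    by (intro ext) auto
  show ?case using IH unfolding eq by simp
qed



theorem mainTheorem8:
  fixes A :: "'n::finite \<Rightarrow> (int ^ 'n) set"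
    and lam :: "'n \<Rightarrow> nat"
    and xs :: "'n list"
  assumes fin: "\<And>i. finite (A i)"
    and pos: "\<And>i. lam i > 0"
    and xs: "distinct xs" "set xs = UNIV"
  defines "G \<equiv> fprod_list (map (\<lambda>i. fpow (laurent_space (A i) (\<lambda>_. 1)) (lam i)) xs)"
    and "B \<equiv> minksum A lam"
  shows "fst G = fst (laurent_space B (\<lambda>b. real (tcount A lam b)))
    \<and> (\<forall>f\<in>fst G. \<forall>g\<in>fst G.
          snd G f g = snd (laurent_space B (\<lambda>b. real (tcount A lam b))) f g)"
proof -
  let ?P = "\<lambda>i. fpow (laurent_space (A i) (\<lambda>_. 1)) (lam i)"
  obtain x ys where xys: "xs = x # ys"
    using xs(2) by (cases xs) auto
  obtain m where m: "lam x = Suc m" using pos[of x] by (cases "lam x") auto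
  have IP: "Inv (?P x) (tuples A (Lk x (lam x))) (tsum (Lk x (lam x)))"
    using Inv_pow[of A x m, OF fin] by (simp add: m)
  have I: "Inv (fprod_list (?P x # map ?P ys))
      (tuples A (\<lambda>i. if i \<in> set ys then lam i else Lk x (lam x) i))
      (tsum (\<lambda>i. if i \<in> set ys then lam i else Lk x (lam x) i))"
    by (rule Inv_list[OF fin pos _ IP]) (use xs xys in \<open>auto simp: Lk_def\<close>)
  have L: "(\<lambda>i. if i \<in> set ys then lam i else Lk x (lam x) i) = lam"
  proof
    fix i
    have "i \<in> set (x # ys)" using xs(2) xys by simp
    thus "(if i \<in> set ys then lam i else Lk x (lam x) i) = lam i" by (auto simp: Lk_def)
  qed
  have IG: "Inv G (tuples A lam) (tsum lam)"
    using I unfolding L G_def xys by simp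
  have finT: "finite (tuples A lam)" using IG by (simp add: Inv_def)
  have w: "laurent_space B (cnt (tuples A lam) (tsum lam)) = laurent_space B (\<lambda>b. real (tcount A lam b))"
  proof (rule laurent_space_weights)
    fix b
    have "(\<Sum>t\<in>tuples A lam. if tsum lam t = b then (1::real) else 0) = (\<Sum>t\<in>{t \<in> tuples A lam. tsum lam t = b}. 1)"
      using finT by (rule sum.inter_filter[symmetric])
    thus "cnt (tuples A lam) (tsum lam) b = real (tcount A lam b)"
      unfolding cnt_def tcount_def by simp
  qed
  have "eqv G (laurent_space B (cnt (tuples A lam) (tsum lam)))"
    using IG by (simp add: Inv_def B_def minksum_def)
  hence "eqv G (laurent_space B (\<lambda>b. real (tcount A lam b)))" unfolding w .
  thus ?thesis unfolding eqv_def .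
qed


end
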